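(* Let $G=(V,E)$ be a finite connected graph with boundary $\partial G\subset V$, let $\alpha\in\Pi(\partial G)$, $p\in[0,1]$, $q>0$. Let $\widehat E\subset E$ be such that for every $e\in\widehat E$ there exists a cutset for $e$ contained in $E\setminus\widehat E$. Let $Q_{\widehat E}(e)$ be the collection of cutsets for $e$ contained in $E\setminus\widehat E$, and for $e\in\widehat E$ set \[\widehat\varepsilon_e:=|p'-p|\;\mathbb P^G_{\max(p,p')}\big(\exists\chi\in Q_{\widehat E}(e)\text{ such that all edges of }\chi\text{ are closed}\big).\] Then: (1) if $p<p'$, then $\mathbb P^G_{(p+\widehat\varepsilon_e\mathbf 1_{e\in\widehat E})_e}\preceq\phi^\alpha_{G,p,q}$; (2) if $p>p'$, then $\phi^\alpha_{G,p,q}\preceq\mathbb P^G_{(p-\widehat\varepsilon_e\mathbf 1_{e\in\widehat E})_e}$.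
   Context: Configurations are $\omega\in\{0,1\}^E$; an edge $e$ is open if $\omega(e)=1$, closed otherwise. $\Pi(\partial G)$ denotes the set of partitions of $\partial G$; vertices in the same block of $\alpha$ are called wired. $G\cup\alpha$ is the (multi)graph obtained from $G$ by identifying wired vertices. $k(\omega,\alpha)$ is the number of connected components of the graph with vertex set $V$ and edge set the open edges of $\omega$, after identifying wired vertices. The FK measure is $\phi^\alpha_{G,p,q}(\omega)=Z^{-1}\big(\prod_{e\in E}p^{\omega(e)}(1-p)^{1-\omega(e)}\big)q^{k(\omega,\alpha)}$. Set $p':=\frac{p}{p+q(1-p)}$. A cutset for an edge $e$ is a set $\chi\subset E\setminus\{e\}$ such that the endpoints of $e$ lie in different connected components of $G\cup\alpha$ with the edges of $\chi\cup\{e\}$ removed. $\mathbb P^G_{(p_e)}$ is the product measure on $\{0,1\}^E$ where edge $e$ is open independently with probability $p_e$ ($\mathbb P^G_s$ when $p_e\equiv s$). $\mu\preceq\mu'$ means $\mu(A)\le\mu'(A)$ for all increasing events $A$. *)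

theory Defs
  imports Complex_Main "HOL-Library.Disjoint_Sets"
begin

text \<open>A finite (multi)graph is given by a vertex set V, an edge set E of abstract edges,
and an endpoint map ends :: 'e => 'v * 'v. A configuration is represented by the set
of its open edges (a subset of E).\<close>

definition step_rel :: "('e \<Rightarrow> 'v \<times> 'v) \<Rightarrow> 'e set \<Rightarrow> 'v set set \<Rightarrow> ('v \<times> 'v) set" where
  "step_rel ends \<omega> \<alpha> = {ends e | e. e \<in> \<omega>} \<union> {(x, y). \<exists>B\<in>\<alpha>. x \<in> B \<and> y \<in> B}"

definition conn_rel :: "'v set \<Rightarrow> ('e \<Rightarrow> 'v \<times> 'v) \<Rightarrow> 'e set \<Rightarrow> 'v set set \<Rightarrow> ('v \<times> 'v) set" where
  "conn_rel V ends \<omega> \<alpha> =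
     Id_on V \<union> (step_rel ends \<omega> \<alpha> \<union> (step_rel ends \<omega> \<alpha>)\<inverse>)\<^sup>+"

definition num_clusters :: "'v set \<Rightarrow> ('e \<Rightarrow> 'v \<times> 'v) \<Rightarrow> 'e set \<Rightarrow> 'v set set \<Rightarrow> nat" where
  "num_clusters V ends \<omega> \<alpha> = card (V // conn_rel V ends \<omega> \<alpha>)"

definition finite_graph :: "'v set \<Rightarrow> 'e set \<Rightarrow> ('e \<Rightarrow> 'v \<times> 'v) \<Rightarrow> bool" where
  "finite_graph V E ends \<longleftrightarrow> finite V \<and> finite E \<and> (\<forall>e\<in>E. fst (ends e) \<in> V \<and> snd (ends e) \<in> V)"

definition connected_graph :: "'v set \<Rightarrow> 'e set \<Rightarrow> ('e \<Rightarrow> 'v \<times> 'v) \<Rightarrow> bool" where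
  "connected_graph V E ends \<longleftrightarrow> (\<forall>x\<in>V. \<forall>y\<in>V. (x, y) \<in> conn_rel V ends E {})"

definition fk_weight :: "'v set \<Rightarrow> 'e set \<Rightarrow> ('e \<Rightarrow> 'v \<times> 'v) \<Rightarrow> 'v set set \<Rightarrow> real \<Rightarrow> real \<Rightarrow> 'e set \<Rightarrow> real" where
  "fk_weight V E ends \<alpha> p q \<omega> = p ^ card \<omega> * (1 - p) ^ card (E - \<omega>) * q ^ num_clusters V ends \<omega> \<alpha>"

definition fk_measure :: "'v set \<Rightarrow> 'e set \<Rightarrow> ('e \<Rightarrow> 'v \<times> 'v) \<Rightarrow> 'v set set \<Rightarrow> real \<Rightarrow> real \<Rightarrow> 'e set set \<Rightarrow> real" where
  "fk_measure V E ends \<alpha> p q A =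
     (\<Sum>\<omega>\<in>A \<inter> Pow E. fk_weight V E ends \<alpha> p q \<omega>) / (\<Sum>\<omega>\<in>Pow E. fk_weight V E ends \<alpha> p q \<omega>)"

definition prod_measure :: "'e set \<Rightarrow> ('e \<Rightarrow> real) \<Rightarrow> 'e set set \<Rightarrow> real" where
  "prod_measure E pe A = (\<Sum>\<omega>\<in>A \<inter> Pow E. (\<Prod>e\<in>\<omega>. pe e) * (\<Prod>e\<in>E - \<omega>. 1 - pe e))"

definition increasing_event :: "'e set \<Rightarrow> 'e set set \<Rightarrow> bool" where
  "increasing_event E A \<longleftrightarrow> A \<subseteq> Pow E \<and> (\<forall>\<omega>\<in>A. \<forall>\<omega>'. \<omega> \<subseteq> \<omega>' \<and> \<omega>' \<subseteq> E \<longrightarrow> \<omega>' \<in> A)"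

definition stoch_dom :: "'e set \<Rightarrow> ('e set set \<Rightarrow> real) \<Rightarrow> ('e set set \<Rightarrow> real) \<Rightarrow> bool" where
  "stoch_dom E \<mu> \<mu>' \<longleftrightarrow> (\<forall>A. increasing_event E A \<longrightarrow> \<mu> A \<le> \<mu>' A)"

definition is_cutset :: "'v set \<Rightarrow> 'e set \<Rightarrow> ('e \<Rightarrow> 'v \<times> 'v) \<Rightarrow> 'v set set \<Rightarrow> 'e \<Rightarrow> 'e set \<Rightarrow> bool" where
  "is_cutset V E ends \<alpha> e \<chi> \<longleftrightarrow> \<chi> \<subseteq> E - {e} \<and>
     ends e \<notin> conn_rel V ends (E - (\<chi> \<union> {e})) \<alpha>"

definition p_prime :: "real \<Rightarrow> real \<Rightarrow> real" where
  "p_prime p q = p / (p + q * (1 - p))"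

end

theory Submission
  imports Defs
begin

lemma pow_split:
  assumes "finite E" "f \<in> E"
  shows "(\<Sum>\<omega>\<in>Pow E. g \<omega>) = (\<Sum>\<omega>\<in>Pow (E-{f}). g (insert f \<omega>) + g \<omega>)"
proof -
  have E: "E = insert f (E-{f})" using assms by auto
  have P: "Pow E = insert f ` Pow (E-{f}) \<union> Pow (E-{f})"
    using Pow_insert[of f "E-{f}"] E by auto
  have disj: "insert f ` Pow (E-{f}) \<inter> Pow (E-{f}) = {}" by auto
  have inj: "inj_on (insert f) (Pow (E-{f}))" unfolding inj_on_def by blast
  have fin: "finite (Pow (E-{f}))" using assms by simp
  have "(\<Sum>\<omega>\<in>Pow E. g \<omega>) = (\<Sum>\<omega>\<in>insert f ` Pow (E-{f}). g \<omega>) + (\<Sum>\<omega>\<in>Pow (E-{f}). g \<omega>)"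
    unfolding P using disj fin by (intro sum.union_disjoint) auto
  also have "(\<Sum>\<omega>\<in>insert f ` Pow (E-{f}). g \<omega>) = (\<Sum>\<omega>\<in>Pow (E-{f}). g (insert f \<omega>))"
    using sum.reindex[OF inj] by simp
  finally show ?thesis by (simp add: sum.distrib)
qed

definition csum :: "'e set \<Rightarrow> 'e set \<Rightarrow> 'e set \<Rightarrow> ('e set \<Rightarrow> real) \<Rightarrow> real" where
  "csum E S H w = (\<Sum>\<omega>\<in>Pow E. if \<omega> \<inter> S = H then w \<omega> else 0)"

lemma csum_merge:
  assumes "finite E" "f \<in> E" "f \<notin> S"
  shows "csum E S H g = csum (E-{f}) S H (\<lambda>\<omega>. g (insert f \<omega>) + g \<omega>)"
  unfolding csum_def pow_split[OF assms(1,2)]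
  using assms(3) by (intro sum.cong) auto

lemma csum_ins:
  assumes "finite E" "f \<in> E" "S \<subseteq> E - {f}" "H \<subseteq> S"
  shows "csum E (insert f S) (insert f H) g = csum (E-{f}) S H (\<lambda>\<omega>. g (insert f \<omega>))"
  unfolding csum_def pow_split[OF assms(1,2)]
proof (intro sum.cong refl)
  fix \<omega> assume "\<omega> \<in> Pow (E-{f})"
  then have "f \<notin> \<omega>" by auto
  moreover have "f \<notin> S" "f \<notin> H" using assms by auto
  ultimately have "(insert f \<omega> \<inter> insert f S = insert f H) = (\<omega> \<inter> S = H)"
    and "\<omega> \<inter> insert f S \<noteq> insert f H" by auto
  then show "(if insert f \<omega> \<inter> insert f S = insert f H then g (insert f \<omega>) else 0) +
         (if \<omega> \<inter> insert f S = insert f H then g \<omega> else 0) =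
         (if \<omega> \<inter> S = H then g (insert f \<omega>) else 0)" by simp
qed

lemma csum_out:
  assumes "finite E" "f \<in> E" "S \<subseteq> E - {f}" "H \<subseteq> S"
  shows "csum E (insert f S) H g = csum (E-{f}) S H g"
  unfolding csum_def pow_split[OF assms(1,2)]
proof (intro sum.cong refl)
  fix \<omega> assume "\<omega> \<in> Pow (E-{f})"
  then have "f \<notin> \<omega>" by auto
  moreover have "f \<notin> S" "f \<notin> H" using assms by auto
  ultimately have "insert f \<omega> \<inter> insert f S \<noteq> H"
    and "(\<omega> \<inter> insert f S = H) = (\<omega> \<inter> S = H)" by auto
  then show "(if insert f \<omega> \<inter> insert f S = H then g (insert f \<omega>) else 0) +
         (if \<omega> \<inter> insert f S = H then g \<omega> else 0) =
         (if \<omega> \<inter> S = H then g \<omega> else 0)" by simp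
qed

lemma sum_inter_split:
  assumes "finite E" "f \<in> E"
  shows "(\<Sum>\<omega>\<in>A \<inter> Pow E. g \<omega>) =
     (\<Sum>\<omega>\<in>{\<omega>\<in>Pow (E-{f}). insert f \<omega> \<in> A} \<inter> Pow (E-{f}). g (insert f \<omega>))
     + (\<Sum>\<omega>\<in>(A \<inter> Pow (E-{f})) \<inter> Pow (E-{f}). g \<omega>)"
proof -
  have fin: "finite (Pow E)" "finite (Pow (E-{f}))" using assms by auto
  have "(\<Sum>\<omega>\<in>A \<inter> Pow E. g \<omega>) = (\<Sum>\<omega>\<in>Pow E. if \<omega> \<in> A then g \<omega> else 0)"
    using sum.inter_restrict[OF fin(1)] by (simp add: Int_commute)
  also have "\<dots> = (\<Sum>\<omega>\<in>Pow (E-{f}). (if insert f \<omega> \<in> A then g (insert f \<omega>) else 0)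
      + (if \<omega> \<in> A then g \<omega> else 0))" by (rule pow_split[OF assms])
  also have "\<dots> = (\<Sum>\<omega>\<in>Pow (E-{f}). if insert f \<omega> \<in> A then g (insert f \<omega>) else 0)
      + (\<Sum>\<omega>\<in>Pow (E-{f}). if \<omega> \<in> A then g \<omega> else 0)" by (rule sum.distrib)
  also have "(\<Sum>\<omega>\<in>Pow (E-{f}). if insert f \<omega> \<in> A then g (insert f \<omega>) else 0)
     = (\<Sum>\<omega>\<in>{\<omega>\<in>Pow (E-{f}). insert f \<omega> \<in> A} \<inter> Pow (E-{f}). g (insert f \<omega>))"
    using sum.inter_restrict[OF fin(2), of "\<lambda>\<omega>. g (insert f \<omega>)" "{\<omega>\<in>Pow (E-{f}). insert f \<omega> \<in> A}"]
    by (simp add: Int_commute)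
  also have "(\<Sum>\<omega>\<in>Pow (E-{f}). if \<omega> \<in> A then g \<omega> else 0)
     = (\<Sum>\<omega>\<in>(A \<inter> Pow (E-{f})) \<inter> Pow (E-{f}). g \<omega>)"
    using sum.inter_restrict[OF fin(2), of g "A \<inter> Pow (E-{f})"]
    by (simp add: Int_commute Int_assoc)
  finally show ?thesis .
qed

lemma pm_split:
  assumes "finite E" "f \<in> E"
  shows "prod_measure E r A = r f * prod_measure (E-{f}) r {\<omega>\<in>Pow (E-{f}). insert f \<omega> \<in> A}
     + (1 - r f) * prod_measure (E-{f}) r (A \<inter> Pow (E-{f}))"
proof -
  let ?E = "E-{f}"
  have fE: "finite ?E" using assms by auto
  have a: "(\<Prod>e\<in>insert f \<omega>. r e) * (\<Prod>e\<in>E - insert f \<omega>. 1 - r e)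
      = r f * ((\<Prod>e\<in>\<omega>. r e) * (\<Prod>e\<in>?E - \<omega>. 1 - r e))" if "\<omega> \<in> Pow ?E" for \<omega>
  proof -
    have "f \<notin> \<omega>" "finite \<omega>" using that fE finite_subset by auto
    moreover have "E - insert f \<omega> = ?E - \<omega>" by auto
    ultimately show ?thesis by simp
  qed
  have b: "(\<Prod>e\<in>\<omega>. r e) * (\<Prod>e\<in>E - \<omega>. 1 - r e)
      = (1 - r f) * ((\<Prod>e\<in>\<omega>. r e) * (\<Prod>e\<in>?E - \<omega>. 1 - r e))" if "\<omega> \<in> Pow ?E" for \<omega>
  proof -
    have "E - \<omega> = insert f (?E - \<omega>)" "f \<notin> ?E - \<omega>" "finite (?E - \<omega>)" using that assms fE by auto
    then show ?thesis by simp
  qed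
  show ?thesis
    unfolding prod_measure_def sum_inter_split[OF assms] sum_distrib_left
    by (intro arg_cong2[where f="(+)"] sum.cong refl) (auto simp: a b)
qed

lemma pm_mono:
  assumes "finite E" "\<forall>e\<in>E. 0 \<le> r e \<and> r e \<le> 1" "A \<inter> Pow E \<subseteq> A'"
  shows "prod_measure E r A \<le> prod_measure E r A'"
proof -
  have "A \<inter> Pow E \<subseteq> A' \<inter> Pow E" using assms(3) by auto
  moreover have "0 \<le> (\<Prod>e\<in>\<omega>. r e) * (\<Prod>e\<in>E - \<omega>. 1 - r e)" if "\<omega> \<in> A' \<inter> Pow E" for \<omega>
    using that assms(2) by (intro mult_nonneg_nonneg prod_nonneg) auto
  ultimately show ?thesis unfolding prod_measure_def using assms(1)
    by (intro sum_mono2) auto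
qed

lemma rx: "(r::real) * x + (1 - r) * x = x" by (simp add: algebra_simps)

lemma csum_empty: "csum E {} {} g = (\<Sum>\<omega>\<in>Pow E. g \<omega>)"
  unfolding csum_def by simp

definition condU :: "'e set \<Rightarrow> 'e set \<Rightarrow> 'e set \<Rightarrow> ('e set \<Rightarrow> real) \<Rightarrow> ('e \<Rightarrow> real) \<Rightarrow> bool" where
  "condU E B T w r \<longleftrightarrow> (\<forall>f\<in>E\<inter>T. \<forall>S H. S \<subseteq> E-{f} \<longrightarrow> H \<subseteq> S \<longrightarrow> (f\<in>B \<longrightarrow> S\<subseteq>B) \<longrightarrow>
     csum E S H (\<lambda>\<omega>. if f \<in> \<omega> then w \<omega> else 0) \<le> r f * csum E S H w)"

lemma inc_split1:
  assumes inc: "increasing_event E A" and f: "f \<in> E"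
  shows "increasing_event (E-{f}) {\<omega>\<in>Pow(E-{f}). insert f \<omega> \<in> A}"
  unfolding increasing_event_def
proof (intro conjI ballI allI impI)
  have up: "\<And>\<omega> \<omega>'. \<omega> \<in> A \<Longrightarrow> \<omega> \<subseteq> \<omega>' \<Longrightarrow> \<omega>' \<subseteq> E \<Longrightarrow> \<omega>' \<in> A"
    using inc unfolding increasing_event_def by blast
  fix \<omega> \<omega>' assume a: "\<omega> \<in> {\<omega>\<in>Pow(E-{f}). insert f \<omega> \<in> A}" and b: "\<omega> \<subseteq> \<omega>' \<and> \<omega>' \<subseteq> E-{f}"
  have "insert f \<omega>' \<in> A"
    by (rule up[of "insert f \<omega>"]) (use a b f in auto)
  then show "\<omega>' \<in> {\<omega>\<in>Pow(E-{f}). insert f \<omega> \<in> A}" using b by auto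
qed auto

lemma inc_split0:
  assumes inc: "increasing_event E A"
  shows "increasing_event (E-{f}) (A \<inter> Pow(E-{f}))"
  unfolding increasing_event_def
proof (intro conjI ballI allI impI)
  have up: "\<And>\<omega> \<omega>'. \<omega> \<in> A \<Longrightarrow> \<omega> \<subseteq> \<omega>' \<Longrightarrow> \<omega>' \<subseteq> E \<Longrightarrow> \<omega>' \<in> A"
    using inc unfolding increasing_event_def by blast
  fix \<omega> \<omega>' assume a: "\<omega> \<in> A \<inter> Pow(E-{f})" and b: "\<omega> \<subseteq> \<omega>' \<and> \<omega>' \<subseteq> E-{f}"
  have "\<omega>' \<in> A"
    by (rule up[of "\<omega>"]) (use a b in auto)
  then show "\<omega>' \<in> A \<inter> Pow(E-{f})" using b by auto
qed auto

lemma condUD: "condU E B T w r \<Longrightarrow> f\<in>E \<Longrightarrow> f\<in>T \<Longrightarrow> S \<subseteq> E-{f} \<Longrightarrow> H \<subseteq> S \<Longrightarrow> (f\<in>B \<Longrightarrow> S\<subseteq>B) \<Longrightarrow>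
     csum E S H (\<lambda>\<omega>. if f \<in> \<omega> then w \<omega> else 0) \<le> r f * csum E S H w"
  unfolding condU_def by blast

lemma dom_upper:
  assumes "finite E"
  shows "(\<forall>\<omega>. 0 \<le> w \<omega>) \<Longrightarrow> (\<forall>e\<in>E. 0 \<le> r e \<and> r e \<le> 1) \<Longrightarrow> condU E B T w r \<Longrightarrow>
    increasing_event E A \<Longrightarrow> (\<forall>f\<in>E-T. \<forall>\<omega>. \<omega> \<subseteq> E-{f} \<longrightarrow> (insert f \<omega> \<in> A \<longleftrightarrow> \<omega> \<in> A)) \<Longrightarrow>
    (\<Sum>\<omega>\<in>A \<inter> Pow E. w \<omega>) \<le> prod_measure E r A * (\<Sum>\<omega>\<in>Pow E. w \<omega>)"
  using assms
proof (induction E arbitrary: w A rule: finite_psubset_induct)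
  case (psubset E)
  note w0 = psubset.prems(1) and rb = psubset.prems(2) and cnd = psubset.prems(3)
    and inc = psubset.prems(4) and ind = psubset.prems(5) and fin = psubset.hyps(1)
  show ?case
  proof (cases "E = {}")
    case True
    then show ?thesis by (cases "{} \<in> A") (auto simp: prod_measure_def)
  next
    case nE: False
    show ?thesis
    proof (cases "E - T = {}")
      case False
      then obtain f where f: "f \<in> E" "f \<notin> T" by auto
      let ?E = "E - {f}"
      define w' where "w' \<omega> = w (insert f \<omega>) + w \<omega>" for \<omega>
      have A1eq: "{\<omega>\<in>Pow ?E. insert f \<omega> \<in> A} = A \<inter> Pow ?E" using ind f by auto
      have sub: "?E \<subset> E" using f by auto
      have c': "condU ?E B T w' r" unfolding condU_def
      proof (intro ballI allI impI)
        fix g S H assume g: "g \<in> ?E \<inter> T" and S: "S \<subseteq> ?E - {g}" and H: "H \<subseteq> S" and B: "g \<in> B \<longrightarrow> S \<subseteq> B"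
        have fS: "f \<notin> S" using S by auto
        have "csum E S H (\<lambda>\<omega>. if g \<in> \<omega> then w \<omega> else 0) \<le> r g * csum E S H w"
          using S H B g by (intro condUD[OF cnd]) auto
        moreover have "csum E S H (\<lambda>\<omega>. if g \<in> \<omega> then w \<omega> else 0) = csum ?E S H (\<lambda>\<omega>. if g \<in> \<omega> then w' \<omega> else 0)"
          unfolding csum_merge[OF fin f(1) fS] using g by (intro arg_cong[where f="csum ?E S H"]) (auto simp: w'_def)
        moreover have "csum E S H w = csum ?E S H w'"
          unfolding csum_merge[OF fin f(1) fS] w'_def by simp
        ultimately show "csum ?E S H (\<lambda>\<omega>. if g \<in> \<omega> then w' \<omega> else 0) \<le> r g * csum ?E S H w'" by simp
      qed
      have inc': "increasing_event ?E (A \<inter> Pow ?E)" by (rule inc_split0[OF inc])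
      have IH: "(\<Sum>\<omega>\<in>(A \<inter> Pow ?E) \<inter> Pow ?E. w' \<omega>) \<le> prod_measure ?E r (A \<inter> Pow ?E) * (\<Sum>\<omega>\<in>Pow ?E. w' \<omega>)"
      proof (rule psubset.IH[OF sub])
        show "\<forall>\<omega>. 0 \<le> w' \<omega>" using w0 by (simp add: w'_def add_nonneg_nonneg)
        show "\<forall>e\<in>?E. 0 \<le> r e \<and> r e \<le> 1" using rb by auto
        show "\<forall>g\<in>?E-T. \<forall>\<omega>. \<omega> \<subseteq> ?E-{g} \<longrightarrow> (insert g \<omega> \<in> A \<inter> Pow ?E \<longleftrightarrow> \<omega> \<in> A \<inter> Pow ?E)"
        proof (intro ballI allI impI)
          fix g \<omega> assume g: "g \<in> ?E-T" and o: "\<omega> \<subseteq> ?E-{g}"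
          have gg: "g \<in> E - T" using g by blast
          have oo: "\<omega> \<subseteq> E - {g}" using o by blast
          have "insert g \<omega> \<in> A \<longleftrightarrow> \<omega> \<in> A" using mp[OF spec[OF bspec[OF ind gg]] oo] .
          then show "(insert g \<omega> \<in> A \<inter> Pow ?E \<longleftrightarrow> \<omega> \<in> A \<inter> Pow ?E)" using g o by auto
        qed
        show "condU ?E B T w' r" by (rule c')
        show "increasing_event ?E (A \<inter> Pow ?E)" by (rule inc')
      qed
      have "(\<Sum>\<omega>\<in>A \<inter> Pow E. w \<omega>) = (\<Sum>\<omega>\<in>(A \<inter> Pow ?E) \<inter> Pow ?E. w' \<omega>)"
        unfolding sum_inter_split[OF fin f(1)] A1eq w'_def sum.distrib ..
      moreover have "prod_measure E r A = prod_measure ?E r (A \<inter> Pow ?E)"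
        unfolding pm_split[OF fin f(1)] A1eq by (rule rx)
      moreover have "(\<Sum>\<omega>\<in>Pow E. w \<omega>) = (\<Sum>\<omega>\<in>Pow ?E. w' \<omega>)"
        unfolding pow_split[OF fin f(1)] w'_def ..
      ultimately show ?thesis using IH by simp
    next
      case ET: True
      obtain f where f: "f \<in> E" "B \<inter> E \<noteq> {} \<longrightarrow> f \<in> B" using nE by blast
      let ?E = "E - {f}"
      define w1 where "w1 \<omega> = w (insert f \<omega>)" for \<omega>
      define A1 where "A1 = {\<omega>\<in>Pow ?E. insert f \<omega> \<in> A}"
      define A0 where "A0 = A \<inter> Pow ?E"
      have sub: "?E \<subset> E" using f by auto
      have c1: "condU ?E B T w1 r" unfolding condU_def
      proof (intro ballI allI impI)
        fix g S H assume g: "g \<in> ?E \<inter> T" and S: "S \<subseteq> ?E - {g}" and H: "H \<subseteq> S" and B: "g \<in> B \<longrightarrow> S \<subseteq> B"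
        have S': "S \<subseteq> E - {f}" using S by auto
        have "csum E (insert f S) (insert f H) (\<lambda>\<omega>. if g \<in> \<omega> then w \<omega> else 0) \<le> r g * csum E (insert f S) (insert f H) w"
          using S H B g f by (intro condUD[OF cnd]) auto
        moreover have "csum E (insert f S) (insert f H) (\<lambda>\<omega>. if g \<in> \<omega> then w \<omega> else 0) = csum ?E S H (\<lambda>\<omega>. if g \<in> \<omega> then w1 \<omega> else 0)"
          unfolding csum_ins[OF fin f(1) S' H] using g by (intro arg_cong[where f="csum ?E S H"]) (auto simp: w1_def)
        moreover have "csum E (insert f S) (insert f H) w = csum ?E S H w1"
          unfolding csum_ins[OF fin f(1) S' H] w1_def by simp
        ultimately show "csum ?E S H (\<lambda>\<omega>. if g \<in> \<omega> then w1 \<omega> else 0) \<le> r g * csum ?E S H w1" by simp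
      qed
      have c0: "condU ?E B T w r" unfolding condU_def
      proof (intro ballI allI impI)
        fix g S H assume g: "g \<in> ?E \<inter> T" and S: "S \<subseteq> ?E - {g}" and H: "H \<subseteq> S" and B: "g \<in> B \<longrightarrow> S \<subseteq> B"
        have S': "S \<subseteq> E - {f}" using S by auto
        have "csum E (insert f S) H (\<lambda>\<omega>. if g \<in> \<omega> then w \<omega> else 0) \<le> r g * csum E (insert f S) H w"
          using S H B g f by (intro condUD[OF cnd]) auto
        then show "csum ?E S H (\<lambda>\<omega>. if g \<in> \<omega> then w \<omega> else 0) \<le> r g * csum ?E S H w"
          unfolding csum_out[OF fin f(1) S' H] .
      qed
      have inc1: "increasing_event ?E A1" using inc_split1[OF inc f(1)] unfolding A1_def .
      have inc0: "increasing_event ?E A0" using inc_split0[OF inc] unfolding A0_def .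
      have IH1: "(\<Sum>\<omega>\<in>A1 \<inter> Pow ?E. w1 \<omega>) \<le> prod_measure ?E r A1 * (\<Sum>\<omega>\<in>Pow ?E. w1 \<omega>)"
      proof (rule psubset.IH[OF sub])
        show "\<forall>\<omega>. 0 \<le> w1 \<omega>" using w0 by (simp add: w1_def)
        show "\<forall>e\<in>?E. 0 \<le> r e \<and> r e \<le> 1" using rb by auto
        show "\<forall>g\<in>?E-T. \<forall>\<omega>. \<omega> \<subseteq> ?E-{g} \<longrightarrow> (insert g \<omega> \<in> A1 \<longleftrightarrow> \<omega> \<in> A1)" using ET by blast
        show "condU ?E B T w1 r" by (rule c1)
        show "increasing_event ?E A1" by (rule inc1)
      qed
      have IH0: "(\<Sum>\<omega>\<in>A0 \<inter> Pow ?E. w \<omega>) \<le> prod_measure ?E r A0 * (\<Sum>\<omega>\<in>Pow ?E. w \<omega>)"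
      proof (rule psubset.IH[OF sub])
        show "\<forall>\<omega>. 0 \<le> w \<omega>" using w0 by simp
        show "\<forall>e\<in>?E. 0 \<le> r e \<and> r e \<le> 1" using rb by auto
        show "\<forall>g\<in>?E-T. \<forall>\<omega>. \<omega> \<subseteq> ?E-{g} \<longrightarrow> (insert g \<omega> \<in> A0 \<longleftrightarrow> \<omega> \<in> A0)" using ET by blast
        show "condU ?E B T w r" by (rule c0)
        show "increasing_event ?E A0" by (rule inc0)
      qed
      define a where "a = prod_measure ?E r A1"
      define b where "b = prod_measure ?E r A0"
      define W1 where "W1 = (\<Sum>\<omega>\<in>Pow ?E. w1 \<omega>)"
      define W0 where "W0 = (\<Sum>\<omega>\<in>Pow ?E. w \<omega>)"
      have up: "\<And>\<omega> \<omega>'. \<omega> \<in> A \<Longrightarrow> \<omega> \<subseteq> \<omega>' \<Longrightarrow> \<omega>' \<subseteq> E \<Longrightarrow> \<omega>' \<in> A"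
        using inc unfolding increasing_event_def by blast
      have ab: "b \<le> a" unfolding a_def b_def
      proof (rule pm_mono)
        show "finite ?E" using fin by simp
        show "\<forall>e\<in>?E. 0 \<le> r e \<and> r e \<le> 1" using rb by auto
        show "A0 \<inter> Pow ?E \<subseteq> A1"
        proof
          fix x assume x: "x \<in> A0 \<inter> Pow ?E"
          have "insert f x \<in> A" by (rule up[of x]) (use x f(1) in \<open>auto simp: A0_def\<close>)
          then show "x \<in> A1" using x unfolding A1_def by auto
        qed
      qed
      have "csum E {} {} (\<lambda>\<omega>. if f \<in> \<omega> then w \<omega> else 0) \<le> r f * csum E {} {} w"
        using f ET by (intro condUD[OF cnd]) auto
      moreover have "csum E {} {} (\<lambda>\<omega>. if f \<in> \<omega> then w \<omega> else 0) = W1"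
        unfolding csum_empty pow_split[OF fin f(1)] W1_def w1_def
        by (intro sum.cong) auto
      moreover have "csum E {} {} w = W1 + W0"
        unfolding csum_empty pow_split[OF fin f(1)] W1_def W0_def w1_def by (simp add: sum.distrib)
      ultimately have Wc: "W1 - r f * (W1 + W0) \<le> 0" by simp
      have "(a - b) * (W1 - r f * (W1 + W0)) \<le> 0"
        using ab Wc by (intro mult_nonneg_nonpos) auto
      then have key: "a * W1 + b * W0 \<le> (r f * a + (1 - r f) * b) * (W1 + W0)"
        by (simp add: algebra_simps)
      have "(\<Sum>\<omega>\<in>A \<inter> Pow E. w \<omega>) = (\<Sum>\<omega>\<in>A1 \<inter> Pow ?E. w1 \<omega>) + (\<Sum>\<omega>\<in>A0 \<inter> Pow ?E. w \<omega>)"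
        unfolding sum_inter_split[OF fin f(1)] A1_def A0_def w1_def ..
      moreover have "prod_measure E r A = r f * a + (1 - r f) * b"
        unfolding pm_split[OF fin f(1)] a_def b_def A1_def A0_def ..
      moreover have "(\<Sum>\<omega>\<in>Pow E. w \<omega>) = W1 + W0"
        unfolding pow_split[OF fin f(1)] W1_def W0_def w1_def by (simp add: sum.distrib)
      ultimately show ?thesis using IH1 IH0 key unfolding a_def[symmetric] b_def[symmetric] W1_def[symmetric] W0_def[symmetric]
        by simp
    qed
  qed
qed

definition condL :: "'e set \<Rightarrow> 'e set \<Rightarrow> 'e set \<Rightarrow> ('e set \<Rightarrow> real) \<Rightarrow> ('e \<Rightarrow> real) \<Rightarrow> bool" where
  "condL E B T w r \<longleftrightarrow> (\<forall>f\<in>E\<inter>T. \<forall>S H. S \<subseteq> E-{f} \<longrightarrow> H \<subseteq> S \<longrightarrow> (f\<in>B \<longrightarrow> S\<subseteq>B) \<longrightarrow>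
     r f * csum E S H w \<le> csum E S H (\<lambda>\<omega>. if f \<in> \<omega> then w \<omega> else 0))"

lemma condLD: "condL E B T w r \<Longrightarrow> f\<in>E \<Longrightarrow> f\<in>T \<Longrightarrow> S \<subseteq> E-{f} \<Longrightarrow> H \<subseteq> S \<Longrightarrow> (f\<in>B \<Longrightarrow> S\<subseteq>B) \<Longrightarrow>
     r f * csum E S H w \<le> csum E S H (\<lambda>\<omega>. if f \<in> \<omega> then w \<omega> else 0)"
  unfolding condL_def by blast

lemma dom_lower:
  assumes "finite E"
  shows "(\<forall>\<omega>. 0 \<le> w \<omega>) \<Longrightarrow> (\<forall>e\<in>E. 0 \<le> r e \<and> r e \<le> 1) \<Longrightarrow> condL E B T w r \<Longrightarrow>
    increasing_event E A \<Longrightarrow> (\<forall>f\<in>E-T. \<forall>\<omega>. \<omega> \<subseteq> E-{f} \<longrightarrow> (insert f \<omega> \<in> A \<longleftrightarrow> \<omega> \<in> A)) \<Longrightarrow>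
    prod_measure E r A * (\<Sum>\<omega>\<in>Pow E. w \<omega>) \<le> (\<Sum>\<omega>\<in>A \<inter> Pow E. w \<omega>)"
  using assms
proof (induction E arbitrary: w A rule: finite_psubset_induct)
  case (psubset E)
  note w0 = psubset.prems(1) and rb = psubset.prems(2) and cnd = psubset.prems(3)
    and inc = psubset.prems(4) and ind = psubset.prems(5) and fin = psubset.hyps(1)
  show ?case
  proof (cases "E = {}")
    case True
    then show ?thesis by (cases "{} \<in> A") (auto simp: prod_measure_def)
  next
    case nE: False
    show ?thesis
    proof (cases "E - T = {}")
      case False
      then obtain f where f: "f \<in> E" "f \<notin> T" by auto
      let ?E = "E - {f}"
      define w' where "w' \<omega> = w (insert f \<omega>) + w \<omega>" for \<omega>
      have A1eq: "{\<omega>\<in>Pow ?E. insert f \<omega> \<in> A} = A \<inter> Pow ?E" using ind f by auto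
      have sub: "?E \<subset> E" using f by auto
      have c': "condL ?E B T w' r" unfolding condL_def
      proof (intro ballI allI impI)
        fix g S H assume g: "g \<in> ?E \<inter> T" and S: "S \<subseteq> ?E - {g}" and H: "H \<subseteq> S" and B: "g \<in> B \<longrightarrow> S \<subseteq> B"
        have fS: "f \<notin> S" using S by auto
        have "r g * csum E S H w \<le> csum E S H (\<lambda>\<omega>. if g \<in> \<omega> then w \<omega> else 0)"
          using S H B g by (intro condLD[OF cnd]) auto
        moreover have "csum E S H (\<lambda>\<omega>. if g \<in> \<omega> then w \<omega> else 0) = csum ?E S H (\<lambda>\<omega>. if g \<in> \<omega> then w' \<omega> else 0)"
          unfolding csum_merge[OF fin f(1) fS] using g by (intro arg_cong[where f="csum ?E S H"]) (auto simp: w'_def)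
        moreover have "csum E S H w = csum ?E S H w'"
          unfolding csum_merge[OF fin f(1) fS] w'_def by simp
        ultimately show "r g * csum ?E S H w' \<le> csum ?E S H (\<lambda>\<omega>. if g \<in> \<omega> then w' \<omega> else 0)" by simp
      qed
      have inc': "increasing_event ?E (A \<inter> Pow ?E)" by (rule inc_split0[OF inc])
      have IH: "prod_measure ?E r (A \<inter> Pow ?E) * (\<Sum>\<omega>\<in>Pow ?E. w' \<omega>) \<le> (\<Sum>\<omega>\<in>(A \<inter> Pow ?E) \<inter> Pow ?E. w' \<omega>)"
      proof (rule psubset.IH[OF sub])
        show "\<forall>\<omega>. 0 \<le> w' \<omega>" using w0 by (simp add: w'_def add_nonneg_nonneg)
        show "\<forall>e\<in>?E. 0 \<le> r e \<and> r e \<le> 1" using rb by auto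
        show "\<forall>g\<in>?E-T. \<forall>\<omega>. \<omega> \<subseteq> ?E-{g} \<longrightarrow> (insert g \<omega> \<in> A \<inter> Pow ?E \<longleftrightarrow> \<omega> \<in> A \<inter> Pow ?E)"
        proof (intro ballI allI impI)
          fix g \<omega> assume g: "g \<in> ?E-T" and o: "\<omega> \<subseteq> ?E-{g}"
          have gg: "g \<in> E - T" using g by blast
          have oo: "\<omega> \<subseteq> E - {g}" using o by blast
          have "insert g \<omega> \<in> A \<longleftrightarrow> \<omega> \<in> A" using mp[OF spec[OF bspec[OF ind gg]] oo] .
          then show "(insert g \<omega> \<in> A \<inter> Pow ?E \<longleftrightarrow> \<omega> \<in> A \<inter> Pow ?E)" using g o by auto
        qed
        show "condL ?E B T w' r" by (rule c')
        show "increasing_event ?E (A \<inter> Pow ?E)" by (rule inc')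
      qed
      have "(\<Sum>\<omega>\<in>A \<inter> Pow E. w \<omega>) = (\<Sum>\<omega>\<in>(A \<inter> Pow ?E) \<inter> Pow ?E. w' \<omega>)"
        unfolding sum_inter_split[OF fin f(1)] A1eq w'_def sum.distrib ..
      moreover have "prod_measure E r A = prod_measure ?E r (A \<inter> Pow ?E)"
        unfolding pm_split[OF fin f(1)] A1eq by (rule rx)
      moreover have "(\<Sum>\<omega>\<in>Pow E. w \<omega>) = (\<Sum>\<omega>\<in>Pow ?E. w' \<omega>)"
        unfolding pow_split[OF fin f(1)] w'_def ..
      ultimately show ?thesis using IH by simp
    next
      case ET: True
      obtain f where f: "f \<in> E" "B \<inter> E \<noteq> {} \<longrightarrow> f \<in> B" using nE by blast
      let ?E = "E - {f}"
      define w1 where "w1 \<omega> = w (insert f \<omega>)" for \<omega>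
      define A1 where "A1 = {\<omega>\<in>Pow ?E. insert f \<omega> \<in> A}"
      define A0 where "A0 = A \<inter> Pow ?E"
      have sub: "?E \<subset> E" using f by auto
      have c1: "condL ?E B T w1 r" unfolding condL_def
      proof (intro ballI allI impI)
        fix g S H assume g: "g \<in> ?E \<inter> T" and S: "S \<subseteq> ?E - {g}" and H: "H \<subseteq> S" and B: "g \<in> B \<longrightarrow> S \<subseteq> B"
        have S': "S \<subseteq> E - {f}" using S by auto
        have "r g * csum E (insert f S) (insert f H) w \<le> csum E (insert f S) (insert f H) (\<lambda>\<omega>. if g \<in> \<omega> then w \<omega> else 0)"
          using S H B g f by (intro condLD[OF cnd]) auto
        moreover have "csum E (insert f S) (insert f H) (\<lambda>\<omega>. if g \<in> \<omega> then w \<omega> else 0) = csum ?E S H (\<lambda>\<omega>. if g \<in> \<omega> then w1 \<omega> else 0)"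
          unfolding csum_ins[OF fin f(1) S' H] using g by (intro arg_cong[where f="csum ?E S H"]) (auto simp: w1_def)
        moreover have "csum E (insert f S) (insert f H) w = csum ?E S H w1"
          unfolding csum_ins[OF fin f(1) S' H] w1_def by simp
        ultimately show "r g * csum ?E S H w1 \<le> csum ?E S H (\<lambda>\<omega>. if g \<in> \<omega> then w1 \<omega> else 0)" by simp
      qed
      have c0: "condL ?E B T w r" unfolding condL_def
      proof (intro ballI allI impI)
        fix g S H assume g: "g \<in> ?E \<inter> T" and S: "S \<subseteq> ?E - {g}" and H: "H \<subseteq> S" and B: "g \<in> B \<longrightarrow> S \<subseteq> B"
        have S': "S \<subseteq> E - {f}" using S by auto
        have "r g * csum E (insert f S) H w \<le> csum E (insert f S) H (\<lambda>\<omega>. if g \<in> \<omega> then w \<omega> else 0)"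
          using S H B g f by (intro condLD[OF cnd]) auto
        then show "r g * csum ?E S H w \<le> csum ?E S H (\<lambda>\<omega>. if g \<in> \<omega> then w \<omega> else 0)"
          unfolding csum_out[OF fin f(1) S' H] .
      qed
      have inc1: "increasing_event ?E A1" using inc_split1[OF inc f(1)] unfolding A1_def .
      have inc0: "increasing_event ?E A0" using inc_split0[OF inc] unfolding A0_def .
      have IH1: "prod_measure ?E r A1 * (\<Sum>\<omega>\<in>Pow ?E. w1 \<omega>) \<le> (\<Sum>\<omega>\<in>A1 \<inter> Pow ?E. w1 \<omega>)"
      proof (rule psubset.IH[OF sub])
        show "\<forall>\<omega>. 0 \<le> w1 \<omega>" using w0 by (simp add: w1_def)
        show "\<forall>e\<in>?E. 0 \<le> r e \<and> r e \<le> 1" using rb by auto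
        show "\<forall>g\<in>?E-T. \<forall>\<omega>. \<omega> \<subseteq> ?E-{g} \<longrightarrow> (insert g \<omega> \<in> A1 \<longleftrightarrow> \<omega> \<in> A1)" using ET by blast
        show "condL ?E B T w1 r" by (rule c1)
        show "increasing_event ?E A1" by (rule inc1)
      qed
      have IH0: "prod_measure ?E r A0 * (\<Sum>\<omega>\<in>Pow ?E. w \<omega>) \<le> (\<Sum>\<omega>\<in>A0 \<inter> Pow ?E. w \<omega>)"
      proof (rule psubset.IH[OF sub])
        show "\<forall>\<omega>. 0 \<le> w \<omega>" using w0 by simp
        show "\<forall>e\<in>?E. 0 \<le> r e \<and> r e \<le> 1" using rb by auto
        show "\<forall>g\<in>?E-T. \<forall>\<omega>. \<omega> \<subseteq> ?E-{g} \<longrightarrow> (insert g \<omega> \<in> A0 \<longleftrightarrow> \<omega> \<in> A0)" using ET by blast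
        show "condL ?E B T w r" by (rule c0)
        show "increasing_event ?E A0" by (rule inc0)
      qed
      define a where "a = prod_measure ?E r A1"
      define b where "b = prod_measure ?E r A0"
      define W1 where "W1 = (\<Sum>\<omega>\<in>Pow ?E. w1 \<omega>)"
      define W0 where "W0 = (\<Sum>\<omega>\<in>Pow ?E. w \<omega>)"
      have up: "\<And>\<omega> \<omega>'. \<omega> \<in> A \<Longrightarrow> \<omega> \<subseteq> \<omega>' \<Longrightarrow> \<omega>' \<subseteq> E \<Longrightarrow> \<omega>' \<in> A"
        using inc unfolding increasing_event_def by blast
      have ab: "b \<le> a" unfolding a_def b_def
      proof (rule pm_mono)
        show "finite ?E" using fin by simp
        show "\<forall>e\<in>?E. 0 \<le> r e \<and> r e \<le> 1" using rb by auto
        show "A0 \<inter> Pow ?E \<subseteq> A1"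
        proof
          fix x assume x: "x \<in> A0 \<inter> Pow ?E"
          have "insert f x \<in> A" by (rule up[of x]) (use x f(1) in \<open>auto simp: A0_def\<close>)
          then show "x \<in> A1" using x unfolding A1_def by auto
        qed
      qed
      have "r f * csum E {} {} w \<le> csum E {} {} (\<lambda>\<omega>. if f \<in> \<omega> then w \<omega> else 0)"
        using f ET by (intro condLD[OF cnd]) auto
      moreover have "csum E {} {} (\<lambda>\<omega>. if f \<in> \<omega> then w \<omega> else 0) = W1"
        unfolding csum_empty pow_split[OF fin f(1)] W1_def w1_def
        by (intro sum.cong) auto
      moreover have "csum E {} {} w = W1 + W0"
        unfolding csum_empty pow_split[OF fin f(1)] W1_def W0_def w1_def by (simp add: sum.distrib)
      ultimately have Wc: "0 \<le> W1 - r f * (W1 + W0)" by simp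
      have "0 \<le> (a - b) * (W1 - r f * (W1 + W0))"
        using ab Wc by (intro mult_nonneg_nonneg) auto
      then have key: "(r f * a + (1 - r f) * b) * (W1 + W0) \<le> a * W1 + b * W0"
        by (simp add: algebra_simps)
      have "(\<Sum>\<omega>\<in>A \<inter> Pow E. w \<omega>) = (\<Sum>\<omega>\<in>A1 \<inter> Pow ?E. w1 \<omega>) + (\<Sum>\<omega>\<in>A0 \<inter> Pow ?E. w \<omega>)"
        unfolding sum_inter_split[OF fin f(1)] A1_def A0_def w1_def ..
      moreover have "prod_measure E r A = r f * a + (1 - r f) * b"
        unfolding pm_split[OF fin f(1)] a_def b_def A1_def A0_def ..
      moreover have "(\<Sum>\<omega>\<in>Pow E. w \<omega>) = W1 + W0"
        unfolding pow_split[OF fin f(1)] W1_def W0_def w1_def by (simp add: sum.distrib)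
      ultimately show ?thesis using IH1 IH0 key unfolding a_def[symmetric] b_def[symmetric] W1_def[symmetric] W0_def[symmetric]
        by simp
    qed
  qed
qed

lemma step_sub:
  assumes fg: "finite_graph V E ends" and dG: "dG \<subseteq> V" and pa: "partition_on dG \<alpha>" and om: "\<omega> \<subseteq> E"
  shows "step_rel ends \<omega> \<alpha> \<subseteq> V \<times> V"
proof
  fix z assume z: "z \<in> step_rel ends \<omega> \<alpha>"
  have U: "\<Union>\<alpha> = dG" using pa unfolding partition_on_def by auto
  show "z \<in> V \<times> V"
  proof (cases "\<exists>e\<in>\<omega>. z = ends e")
    case True
    then obtain e where e: "e \<in> \<omega>" "z = ends e" by auto
    then have "fst z \<in> V" "snd z \<in> V" using fg om unfolding finite_graph_def by auto
    then show ?thesis by (cases z) auto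
  next
    case False
    then obtain a b B where "z = (a,b)" "B \<in> \<alpha>" "a \<in> B" "b \<in> B" using z unfolding step_rel_def by auto
    then show ?thesis using U dG by auto
  qed
qed

lemma conn_equiv:
  assumes fg: "finite_graph V E ends" and dG: "dG \<subseteq> V" and pa: "partition_on dG \<alpha>" and om: "\<omega> \<subseteq> E"
  shows "equiv V (conn_rel V ends \<omega> \<alpha>)"
proof -
  let ?X = "step_rel ends \<omega> \<alpha> \<union> (step_rel ends \<omega> \<alpha>)\<inverse>"
  have X: "?X \<subseteq> V \<times> V" using step_sub[OF assms] by auto
  have Xt: "?X\<^sup>+ \<subseteq> V \<times> V" using trancl_subset_Sigma[OF X] .
  have sX: "sym (?X\<^sup>+)" by (intro sym_trancl) (auto simp: sym_def)
  show ?thesis unfolding conn_rel_def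
  proof (rule equivI)
    show "Id_on V \<union> ?X\<^sup>+ \<subseteq> V \<times> V" using Xt by auto
    show "refl_on V (Id_on V \<union> ?X\<^sup>+)" by (auto simp: refl_on_def)
    show "sym (Id_on V \<union> ?X\<^sup>+)" using sX by (auto simp: sym_def)
    show "trans (Id_on V \<union> ?X\<^sup>+)"
    proof (rule transI)
      fix a b c assume ab: "(a, b) \<in> Id_on V \<union> ?X\<^sup>+" and bc: "(b, c) \<in> Id_on V \<union> ?X\<^sup>+"
      show "(a, c) \<in> Id_on V \<union> ?X\<^sup>+"
      proof (cases "(a, b) \<in> Id_on V")
        case True then have "a = b" by auto
        then show ?thesis using bc by simp
      next
        case False
        then have ab': "(a, b) \<in> ?X\<^sup>+" using ab by auto
        show ?thesis
        proof (cases "(b, c) \<in> Id_on V")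
          case True then have "b = c" by auto
          then show ?thesis using ab by simp
        next
          case False
          then have "(b, c) \<in> ?X\<^sup>+" using bc by auto
          then show ?thesis using ab' by (meson UnI2 trancl_trans)
        qed
      qed
    qed
  qed
qed

lemma conn_mono:
  assumes "\<omega> \<subseteq> \<omega>'"
  shows "conn_rel V ends \<omega> \<alpha> \<subseteq> conn_rel V ends \<omega>' \<alpha>"
proof -
  have "step_rel ends \<omega> \<alpha> \<subseteq> step_rel ends \<omega>' \<alpha>" using assms unfolding step_rel_def by auto
  then have "step_rel ends \<omega> \<alpha> \<union> (step_rel ends \<omega> \<alpha>)\<inverse> \<subseteq> step_rel ends \<omega>' \<alpha> \<union> (step_rel ends \<omega>' \<alpha>)\<inverse>" by auto
  then show ?thesis unfolding conn_rel_def using trancl_mono by blast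
qed

lemma conn_insert:
  assumes fg: "finite_graph V E ends" and dG: "dG \<subseteq> V" and pa: "partition_on dG \<alpha>" and om: "\<omega> \<subseteq> E"
    and e: "e \<in> E" and xy: "ends e = (x, y)"
  defines "R \<equiv> conn_rel V ends \<omega> \<alpha>"
  shows "conn_rel V ends (insert e \<omega>) \<alpha> = R \<union> (R``{x} \<union> R``{y}) \<times> (R``{x} \<union> R``{y})"
proof -
  let ?R' = "conn_rel V ends (insert e \<omega>) \<alpha>"
  let ?Z = "R \<union> (R``{x} \<union> R``{y}) \<times> (R``{x} \<union> R``{y})"
  have eqR: "equiv V R" unfolding R_def by (rule conn_equiv[OF fg dG pa om])
  have om': "insert e \<omega> \<subseteq> E" using om e by auto
  have eqR': "equiv V ?R'" by (rule conn_equiv[OF fg dG pa om'])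
  have xV: "x \<in> V" and yV: "y \<in> V" using fg e xy unfolding finite_graph_def by (metis fst_conv snd_conv)+
  have st': "step_rel ends (insert e \<omega>) \<alpha> = insert (x,y) (step_rel ends \<omega> \<alpha>)"
  proof -
    have "{ends e' |e'. e' \<in> insert e \<omega>} = insert (ends e) {ends e' |e'. e' \<in> \<omega>}" by blast
    then have "{ends e' |e'. e' \<in> insert e \<omega>} = insert (x,y) {ends e' |e'. e' \<in> \<omega>}" using xy by simp
    then show ?thesis unfolding step_rel_def by simp
  qed
  have xyR': "(x, y) \<in> ?R'" unfolding conn_rel_def st' by auto
  have RR': "R \<subseteq> ?R'" unfolding R_def by (rule conn_mono) auto
  have "?Z \<subseteq> ?R'"
  proof
    fix z assume "z \<in> ?Z"
    then show "z \<in> ?R'"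
    proof
      assume "z \<in> R" then show ?thesis using RR' by auto
    next
      assume z: "z \<in> (R``{x} \<union> R``{y}) \<times> (R``{x} \<union> R``{y})"
      obtain a b where ab: "z = (a,b)" by (cases z)
      have a: "(x, a) \<in> ?R' \<or> (y, a) \<in> ?R'" and b: "(x, b) \<in> ?R' \<or> (y, b) \<in> ?R'"
        using z ab RR' by auto
      have yx: "(y, x) \<in> ?R'" using xyR' eqR' by (meson equivE symD)
      have tr: "trans ?R'" and sy: "sym ?R'" using eqR' by (auto elim: equivE)
      have "(x, a) \<in> ?R'" using a xyR' tr by (meson transD)
      moreover have "(x, b) \<in> ?R'" using b xyR' tr by (meson transD)
      ultimately show ?thesis using ab tr sy by (meson symD transD)
    qed
  qed
  moreover have "?R' \<subseteq> ?Z"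
  proof -
    have tZ: "trans ?Z"
    proof (rule transI)
      fix a b c assume ab: "(a, b) \<in> ?Z" and bc: "(b, c) \<in> ?Z"
      have trR: "trans R" and syR: "sym R" using eqR by (auto elim: equivE)
      show "(a, c) \<in> ?Z"
      proof (cases "(a,b) \<in> R")
        case True
        show ?thesis
        proof (cases "(b,c) \<in> R")
          case True
          then show ?thesis using \<open>(a,b) \<in> R\<close> trR by (meson UnI1 transD)
        next
          case False
          then have "b \<in> R``{x} \<union> R``{y}" "c \<in> R``{x} \<union> R``{y}" using bc by auto
          moreover have "(b, a) \<in> R" using \<open>(a,b) \<in> R\<close> syR by (meson symD)
          ultimately have "a \<in> R``{x} \<union> R``{y}" using trR by (auto dest: transD)
          then show ?thesis using \<open>c \<in> R``{x} \<union> R``{y}\<close> by auto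
        qed
      next
        case False
        then have a1: "a \<in> R``{x} \<union> R``{y}" "b \<in> R``{x} \<union> R``{y}" using ab by auto
        show ?thesis
        proof (cases "(b,c) \<in> R")
          case True
          then have "c \<in> R``{x} \<union> R``{y}" using a1(2) trR by (auto dest: transD)
          then show ?thesis using a1 by auto
        next
          case False
          then show ?thesis using bc a1 by auto
        qed
      qed
    qed
    have xX: "x \<in> R``{x}" and yY: "y \<in> R``{y}" using equiv_class_self[OF eqR] xV yV by auto
    let ?X = "step_rel ends (insert e \<omega>) \<alpha> \<union> (step_rel ends (insert e \<omega>) \<alpha>)\<inverse>"
    have "step_rel ends \<omega> \<alpha> \<subseteq> R" unfolding R_def conn_rel_def by auto
    then have "?X \<subseteq> ?Z" unfolding st' using xX yY eqR by (auto elim!: equivE dest: symD)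
    then have "?X\<^sup>+ \<subseteq> ?Z" using tZ by (metis trancl_id trancl_mono_subset)
    moreover have "Id_on V \<subseteq> ?Z" unfolding R_def conn_rel_def by auto
    ultimately show ?thesis unfolding conn_rel_def by auto
  qed
  ultimately show ?thesis by auto
qed


lemma class_same:
  assumes eq: "equiv V R" and xy: "(x, y) \<in> R"
  shows "R \<union> (R``{x} \<union> R``{y}) \<times> (R``{x} \<union> R``{y}) = R"
proof -
  have XY: "R``{x} = R``{y}" using equiv_class_eq[OF eq xy] .
  have "R``{x} \<times> R``{x} \<subseteq> R"
  proof
    fix z assume "z \<in> R``{x} \<times> R``{x}"
    then obtain a b where "z = (a,b)" "(x,a) \<in> R" "(x,b) \<in> R" by auto
    then show "z \<in> R" using eq by (meson equivE symD transD)
  qed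
  then show ?thesis using XY by auto
qed

lemma card_merge:
  assumes eq: "equiv V R" and fin: "finite V" and xV: "x \<in> V" and yV: "y \<in> V" and nxy: "(x, y) \<notin> R"
  shows "card (V // (R \<union> (R``{x} \<union> R``{y}) \<times> (R``{x} \<union> R``{y}))) + 1 = card (V // R)"
proof -
  define X where "X = R``{x}"
  define Y where "Y = R``{y}"
  let ?R' = "R \<union> (X \<union> Y) \<times> (X \<union> Y)"
  let ?Q = "V // R"
  have trR: "trans R" and syR: "sym R" and RV: "R \<subseteq> V \<times> V" using eq by (auto elim: equivE)
  have cls: "?R'``{v} = (if v \<in> X \<union> Y then X \<union> Y else R``{v})" if v: "v \<in> V" for v
  proof (cases "v \<in> X \<union> Y")
    case True
    then have "R``{v} = X \<or> R``{v} = Y" unfolding X_def Y_def using equiv_class_eq[OF eq] by auto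
    then have "R``{v} \<subseteq> X \<union> Y" by auto
    then show ?thesis using True by auto
  qed auto
  have XQ: "X \<in> ?Q" and YQ: "Y \<in> ?Q" unfolding X_def Y_def using xV yV by (auto intro: quotientI)
  have xX: "x \<in> X" and yY: "y \<in> Y" unfolding X_def Y_def using equiv_class_self[OF eq] xV yV by auto
  have yX: "y \<notin> X" using nxy unfolding X_def by auto
  have XY: "X \<noteq> Y" using yX yY by auto
  have notin: "X \<union> Y \<notin> ?Q"
  proof
    assume "X \<union> Y \<in> ?Q"
    then obtain v where v: "v \<in> V" "X \<union> Y = R``{v}" by (auto elim: quotientE)
    then have "(v, x) \<in> R" using xX by auto
    then have "R``{v} = X" unfolding X_def using equiv_class_eq[OF eq] by auto
    then show False using v yY yX by auto
  qed
  have Q': "V // ?R' = insert (X \<union> Y) (?Q - {X, Y})"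
  proof
    show "V // ?R' \<subseteq> insert (X \<union> Y) (?Q - {X, Y})"
    proof
      fix C assume "C \<in> V // ?R'"
      then obtain v where v: "v \<in> V" "C = ?R'``{v}" by (auto elim: quotientE)
      show "C \<in> insert (X \<union> Y) (?Q - {X, Y})"
      proof (cases "v \<in> X \<union> Y")
        case True then show ?thesis using cls[OF v(1)] v by auto
      next
        case False
        then have "R``{v} \<noteq> X" "R``{v} \<noteq> Y" using equiv_class_self[OF eq v(1)] by auto
        then show ?thesis using cls[OF v(1)] v False by (auto intro: quotientI)
      qed
    qed
    show "insert (X \<union> Y) (?Q - {X, Y}) \<subseteq> V // ?R'"
    proof
      fix C assume C: "C \<in> insert (X \<union> Y) (?Q - {X, Y})"
      show "C \<in> V // ?R'"
      proof (cases "C = X \<union> Y")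
        case True
        then have "C = ?R'``{x}" using cls[OF xV] xX by auto
        then show ?thesis using xV by (auto intro: quotientI)
      next
        case False
        then have "C \<in> ?Q" "C \<noteq> X" "C \<noteq> Y" using C by auto
        then obtain v where v: "v \<in> V" "C = R``{v}" by (auto elim: quotientE)
        have "v \<notin> X"
        proof
          assume "v \<in> X" then have "(x, v) \<in> R" unfolding X_def by auto
          then have "C = X" using v equiv_class_eq[OF eq] unfolding X_def by auto
          then show False using \<open>C \<noteq> X\<close> by simp
        qed
        moreover have "v \<notin> Y"
        proof
          assume "v \<in> Y" then have "(y, v) \<in> R" unfolding Y_def by auto
          then have "C = Y" using v equiv_class_eq[OF eq] unfolding Y_def by auto
          then show False using \<open>C \<noteq> Y\<close> by simp
        qed
        ultimately have "C = ?R'``{v}" using cls[OF v(1)] v by auto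
        then show ?thesis using v(1) by (auto intro: quotientI)
      qed
    qed
  qed
  have finQ: "finite ?Q" using finite_quotient[OF fin RV] .
  have "card (V // ?R') = card (?Q - {X, Y}) + 1"
    unfolding Q' using notin finQ by simp
  moreover have "card (?Q - {X, Y}) = card ?Q - 2"
    using card_Diff_subset[of "{X,Y}" ?Q] XQ YQ XY by simp
  moreover have "2 \<le> card ?Q"
    using card_mono[OF finQ, of "{X,Y}"] XQ YQ XY by simp
  ultimately show ?thesis unfolding X_def Y_def by simp
qed


lemma fk_eq:
  assumes fg: "finite_graph V E ends" and dG: "dG \<subseteq> V" and pa: "partition_on dG \<alpha>"
    and p0: "0 < p" and p1: "p < 1" and q0: "q > 0" and e: "e \<in> E" and om: "\<omega> \<subseteq> E - {e}"
  shows "fk_weight V E ends \<alpha> p q (insert e \<omega>) =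
    (if ends e \<in> conn_rel V ends \<omega> \<alpha> then p else p_prime p q) *
    (fk_weight V E ends \<alpha> p q (insert e \<omega>) + fk_weight V E ends \<alpha> p q \<omega>)"
proof -
  obtain x y where xy: "ends e = (x, y)" by (cases "ends e")
  define R where "R = conn_rel V ends \<omega> \<alpha>"
  have omE: "\<omega> \<subseteq> E" using om by auto
  have eqR: "equiv V R" unfolding R_def by (rule conn_equiv[OF fg dG pa omE])
  have finV: "finite V" and finE: "finite E" using fg unfolding finite_graph_def by auto
  have xV: "x \<in> V" and yV: "y \<in> V" using fg e xy unfolding finite_graph_def by (metis fst_conv snd_conv)+
  have R': "conn_rel V ends (insert e \<omega>) \<alpha> = R \<union> (R``{x} \<union> R``{y}) \<times> (R``{x} \<union> R``{y})"
    unfolding R_def by (rule conn_insert[OF fg dG pa omE e xy])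
  define a where "a = card \<omega>"
  define b where "b = card (E - insert e \<omega>)"
  define k1 where "k1 = num_clusters V ends (insert e \<omega>) \<alpha>"
  define k0 where "k0 = num_clusters V ends \<omega> \<alpha>"
  have fo: "finite \<omega>" using finite_subset[OF omE finE] .
  have eo: "e \<notin> \<omega>" using om by auto
  have ca: "card (insert e \<omega>) = a + 1" unfolding a_def using fo eo by simp
  have Ee: "E - \<omega> = insert e (E - insert e \<omega>)" using e eo by blast
  have cb: "card (E - \<omega>) = b + 1" unfolding b_def Ee
    by (subst card_insert_disjoint) (use finE in auto)
  have w1: "fk_weight V E ends \<alpha> p q (insert e \<omega>) = p^(a+1) * (1-p)^b * q^k1"
    unfolding fk_weight_def ca b_def k1_def ..
  have w0: "fk_weight V E ends \<alpha> p q \<omega> = p^a * (1-p)^(b+1) * q^k0"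
    unfolding fk_weight_def cb a_def k0_def ..
  show ?thesis
  proof (cases "ends e \<in> R")
    case True
    then have "(x,y) \<in> R" using xy by simp
    then have "k1 = k0" unfolding k1_def k0_def num_clusters_def R' class_same[OF eqR \<open>(x,y) \<in> R\<close>] by (simp add: R_def)
    then show ?thesis unfolding w1 w0 using True unfolding R_def
      by (simp add: algebra_simps)
  next
    case False
    then have "(x,y) \<notin> R" using xy by simp
    then have k: "k1 + 1 = k0" unfolding k1_def k0_def num_clusters_def R' R_def[symmetric]
      by (rule card_merge[OF eqR finV xV yV])
    have d: "p + q * (1 - p) > 0" using p0 p1 q0 by (simp add: add_pos_nonneg)
    have "p^(a+1) * (1-p)^b * q^k1 = p / (p + q * (1 - p)) * (p^(a+1) * (1-p)^b * q^k1 + p^a * (1-p)^(b+1) * q^(k1+1))"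
      using d by (simp add: field_simps power_add)
    then show ?thesis unfolding w1 w0 p_prime_def k[symmetric] using False unfolding R_def by simp
  qed
qed

lemma csum_mono: "(\<And>\<omega>. \<omega> \<in> Pow E \<Longrightarrow> \<omega> \<inter> S = H \<Longrightarrow> g \<omega> \<le> h \<omega>) \<Longrightarrow> csum E S H g \<le> csum E S H h"
  unfolding csum_def by (intro sum_mono) auto

lemma csum_cmult: "csum E S H (\<lambda>\<omega>. c * g \<omega>) = c * csum E S H g"
  unfolding csum_def sum_distrib_left by (intro sum.cong) auto

lemma csum_add: "csum E S H (\<lambda>\<omega>. g \<omega> + h \<omega>) = csum E S H g + csum E S H h"
  unfolding csum_def sum.distrib[symmetric] by (intro sum.cong) auto

lemma csum_merge_open:
  assumes "finite E" "f \<in> E" "f \<notin> S"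
  shows "csum E S H (\<lambda>\<omega>. if f \<in> \<omega> then g \<omega> else 0) = csum (E-{f}) S H (\<lambda>\<omega>. g (insert f \<omega>))"
  unfolding csum_def pow_split[OF assms(1,2)]
  using assms(3) by (intro sum.cong) auto

lemma csum_merge_D:
  assumes "finite E" "f \<in> E" "f \<notin> S" "\<And>\<omega>. D (insert f \<omega>) = D \<omega>"
  shows "csum E S H (\<lambda>\<omega>. if D \<omega> then g \<omega> else 0) = csum (E-{f}) S H (\<lambda>\<omega>. if D \<omega> then g (insert f \<omega>) + g \<omega> else 0)"
  unfolding csum_def pow_split[OF assms(1,2)]
  using assms(3,4) by (intro sum.cong) auto

lemma pm_total:
  assumes "finite E"
  shows "prod_measure E r (Pow E) = 1"
  using assms
proof (induction E rule: finite_psubset_induct)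
  case (psubset E)
  show ?case
  proof (cases "E = {}")
    case True then show ?thesis by (simp add: prod_measure_def)
  next
    case False
    then obtain f where f: "f \<in> E" by auto
    have s1: "{\<omega>\<in>Pow (E-{f}). insert f \<omega> \<in> Pow E} = Pow (E-{f})" using f by auto
    have s2: "Pow E \<inter> Pow (E-{f}) = Pow (E-{f})" by auto
    have IH: "prod_measure (E-{f}) r (Pow (E-{f})) = 1" using psubset.IH[of "E-{f}"] f psubset.hyps by auto
    show ?thesis unfolding pm_split[OF psubset.hyps f] s1 s2 IH by simp
  qed
qed

lemma pm_compl:
  assumes "finite E"
  shows "prod_measure E r {\<omega>\<in>Pow E. \<not> P \<omega>} + prod_measure E r {\<omega>. \<omega> \<subseteq> E \<and> P \<omega>} = 1"
proof -
  define g where "g \<omega> = (\<Prod>e\<in>\<omega>. r e) * (\<Prod>e\<in>E - \<omega>. 1 - r e)" for \<omega>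
  let ?A1 = "{\<omega>\<in>Pow E. \<not> P \<omega>} \<inter> Pow E"
  let ?A2 = "{\<omega>. \<omega> \<subseteq> E \<and> P \<omega>} \<inter> Pow E"
  have u: "Pow E \<inter> Pow E = ?A1 \<union> ?A2" by blast
  have d: "?A1 \<inter> ?A2 = {}" by blast
  have f1: "finite ?A1" "finite ?A2" using assms by auto
  have "prod_measure E r (Pow E) = sum g (?A1 \<union> ?A2)" unfolding prod_measure_def g_def u ..
  also have "\<dots> = sum g ?A1 + sum g ?A2" by (rule sum.union_disjoint[OF f1 d])
  finally have "prod_measure E r (Pow E) = prod_measure E r {\<omega>\<in>Pow E. \<not> P \<omega>} + prod_measure E r {\<omega>. \<omega> \<subseteq> E \<and> P \<omega>}"
    unfolding prod_measure_def g_def .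
  then show ?thesis using pm_total[OF assms] by simp
qed

lemma pm_nonneg:
  assumes "\<forall>e\<in>E. 0 \<le> r e \<and> r e \<le> 1"
  shows "0 \<le> prod_measure E r A"
  unfolding prod_measure_def using assms by (intro sum_nonneg mult_nonneg_nonneg prod_nonneg) auto

lemma pm_le1:
  assumes "finite E" "\<forall>e\<in>E. 0 \<le> r e \<and> r e \<le> 1"
  shows "prod_measure E r A \<le> 1"
  using pm_mono[OF assms, of A "Pow E"] pm_total[OF assms(1)] by auto

lemma ptw_condU:
  assumes fin: "finite E" and pw: "\<forall>f\<in>E\<inter>T. \<forall>\<omega>. \<omega> \<subseteq> E-{f} \<longrightarrow> v (insert f \<omega>) \<le> r f * (v (insert f \<omega>) + v \<omega>)"
  shows "condU E B T v r"
  unfolding condU_def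
proof (intro ballI allI impI)
  fix f S H assume f: "f \<in> E \<inter> T" and S: "S \<subseteq> E - {f}" and "H \<subseteq> S" "f \<in> B \<longrightarrow> S \<subseteq> B"
  have fS: "f \<notin> S" and fE: "f \<in> E" using S f by auto
  have "csum (E-{f}) S H (\<lambda>\<omega>. v (insert f \<omega>)) \<le> csum (E-{f}) S H (\<lambda>\<omega>. r f * (v (insert f \<omega>) + v \<omega>))"
    using pw f by (intro csum_mono) auto
  then show "csum E S H (\<lambda>\<omega>. if f \<in> \<omega> then v \<omega> else 0) \<le> r f * csum E S H v"
    unfolding csum_merge_open[OF fin fE fS] csum_merge[OF fin fE fS] csum_cmult .
qed

theorem proposition3p1:
  fixes V :: "'v set" and E :: "'e set" and ends :: "'e \<Rightarrow> 'v \<times> 'v"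
    and dG :: "'v set" and \<alpha> :: "'v set set" and p q :: real and Ehat :: "'e set"
  assumes "finite_graph V E ends" and "connected_graph V E ends"
    and "dG \<subseteq> V" and "partition_on dG \<alpha>"
    and "0 \<le> p" and "p \<le> 1" and "q > 0"
    and "Ehat \<subseteq> E"
    and "\<forall>e\<in>Ehat. \<exists>\<chi>. is_cutset V E ends \<alpha> e \<chi> \<and> \<chi> \<subseteq> E - Ehat"
  defines "eps \<equiv> \<lambda>e. \<bar>p_prime p q - p\<bar> *
      prod_measure E (\<lambda>_. max p (p_prime p q))
        {\<omega>. \<omega> \<subseteq> E \<and> (\<exists>\<chi>. is_cutset V E ends \<alpha> e \<chi> \<and> \<chi> \<subseteq> E - Ehat \<and> \<chi> \<inter> \<omega> = {})}"
  shows "(p < p_prime p q \<longrightarrow>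
           stoch_dom E (prod_measure E (\<lambda>e. p + (if e \<in> Ehat then eps e else 0)))
                       (fk_measure V E ends \<alpha> p q))
       \<and> (p > p_prime p q \<longrightarrow>
           stoch_dom E (fk_measure V E ends \<alpha> p q)
                       (prod_measure E (\<lambda>e. p - (if e \<in> Ehat then eps e else 0))))"
  proof -
  let ?p' = "p_prime p q"
  define W where "W = fk_weight V E ends \<alpha> p q"
  define D where "D e \<omega> \<longleftrightarrow> (\<exists>\<chi>. is_cutset V E ends \<alpha> e \<chi> \<and> \<chi> \<subseteq> E - Ehat \<and> \<chi> \<inter> \<omega> = {})" for e \<omega>
  have fg: "finite_graph V E ends" and dG: "dG \<subseteq> V" and pa: "partition_on dG \<alpha>" using assms by auto
  have finE: "finite E" using fg unfolding finite_graph_def by auto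
  have eps_eq: "eps e = \<bar>?p' - p\<bar> * prod_measure E (\<lambda>_. max p ?p') {\<omega>. \<omega> \<subseteq> E \<and> D e \<omega>}" for e
    unfolding eps_def D_def ..
  have D1: "ends e \<notin> conn_rel V ends \<omega> \<alpha>" if Dw: "D e \<omega>" and omE: "\<omega> \<subseteq> E - {e}" for e \<omega>
  proof -
    obtain \<chi> where c: "is_cutset V E ends \<alpha> e \<chi>" "\<chi> \<inter> \<omega> = {}" using Dw unfolding D_def by blast
    have n: "ends e \<notin> conn_rel V ends (E - (\<chi> \<union> {e})) \<alpha>" using c(1) unfolding is_cutset_def by blast
    have "\<omega> \<subseteq> E - (\<chi> \<union> {e})" using omE c(2) by blast
    then show ?thesis using n conn_mono by blast
  qed
  have D2: "D e (insert f \<omega>) = D e \<omega>" if "f \<in> Ehat" for e f \<omega>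
  proof -
    have "\<chi> \<inter> insert f \<omega> = \<chi> \<inter> \<omega>" if "\<chi> \<subseteq> E - Ehat" for \<chi> using that \<open>f \<in> Ehat\<close> by blast
    then show ?thesis unfolding D_def by metis
  qed
  have D3: "D e \<omega>" if "\<omega> \<subseteq> \<omega>'" "D e \<omega>'" for e \<omega> \<omega>'
    using that unfolding D_def by blast
  have Wnn: "0 \<le> W \<omega>" if "0 \<le> p" "p \<le> 1" for \<omega>
    unfolding W_def fk_weight_def using that \<open>q > 0\<close> by simp
  have Wpos: "0 < W \<omega>" if "0 < p" "p < 1" for \<omega>
    unfolding W_def fk_weight_def using that \<open>q > 0\<close> by simp
  have Zpos: "0 < (\<Sum>\<omega>\<in>Pow E. W \<omega>)" if "0 < p" "p < 1"
    using Wpos[OF that] finE by (intro sum_pos) auto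
  have FK: "W (insert f \<omega>) = (if ends f \<in> conn_rel V ends \<omega> \<alpha> then p else ?p') * (W (insert f \<omega>) + W \<omega>)"
    if "0 < p" "p < 1" "f \<in> E" "\<omega> \<subseteq> E - {f}" for f \<omega>
    unfolding W_def by (rule fk_eq[OF fg dG pa that(1,2) \<open>q > 0\<close> that(3,4)])
  have pp: "0 < p + q * (1 - p)" if "0 < p" "p < 1" using that \<open>q > 0\<close> by (simp add: add_pos_nonneg)
  have p'01: "0 \<le> ?p' \<and> ?p' \<le> 1" if "0 < p" "p < 1"
    using pp[OF that] that \<open>q > 0\<close> unfolding p_prime_def by (simp add: divide_le_eq_1)
  have KD: "prod_measure E (\<lambda>_. max p ?p') {\<omega>. \<omega> \<subseteq> E \<and> D e \<omega>} * csum E S H W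
      \<le> csum E S H (\<lambda>\<omega>. if D e \<omega> then W \<omega> else 0)"
    if p01: "0 < p" "p < 1" and SE: "S \<subseteq> Ehat" for e S H
  proof -
    let ?m = "max p ?p'"
    have m01: "0 \<le> ?m" "?m \<le> 1" using p'01[OF p01] p01 by auto
    define wH where "wH \<omega> = (if \<omega> \<inter> S = H then W \<omega> else 0)" for \<omega>
    define A where "A = {\<omega>\<in>Pow E. \<not> D e \<omega>}"
    have wHnn: "\<forall>\<omega>. 0 \<le> wH \<omega>" using Wnn p01 unfolding wH_def by auto
    have cU: "condU E {} (E - S) wH (\<lambda>_. ?m)"
    proof (rule ptw_condU[OF finE], intro ballI allI impI)
      fix f \<omega> assume f: "f \<in> E \<inter> (E - S)" and om: "\<omega> \<subseteq> E - {f}"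
      have fS: "f \<notin> S" using f by auto
      have "W (insert f \<omega>) \<le> ?m * (W (insert f \<omega>) + W \<omega>)"
      proof -
        have "W (insert f \<omega>) = (if ends f \<in> conn_rel V ends \<omega> \<alpha> then p else ?p') * (W (insert f \<omega>) + W \<omega>)"
          using FK[OF p01 _ om] f by auto
        also have "\<dots> \<le> ?m * (W (insert f \<omega>) + W \<omega>)"
          using Wnn p01 by (intro mult_right_mono) auto
        finally show ?thesis .
      qed
      then show "wH (insert f \<omega>) \<le> ?m * (wH (insert f \<omega>) + wH \<omega>)"
        unfolding wH_def using fS by (auto simp: Int_insert_left)
    qed
    have incA: "increasing_event E A" unfolding increasing_event_def A_def using D3 by blast
    have indA: "\<forall>f\<in>E - (E - S). \<forall>\<omega>. \<omega> \<subseteq> E - {f} \<longrightarrow> (insert f \<omega> \<in> A \<longleftrightarrow> \<omega> \<in> A)"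
    proof (intro ballI allI impI)
      fix f \<omega> assume f: "f \<in> E - (E - S)" and om: "\<omega> \<subseteq> E - {f}"
      have "f \<in> Ehat" using f SE by auto
      then show "(insert f \<omega> \<in> A \<longleftrightarrow> \<omega> \<in> A)" unfolding A_def using D2 f om by auto
    qed
    have main: "(\<Sum>\<omega>\<in>A \<inter> Pow E. wH \<omega>) \<le> prod_measure E (\<lambda>_. ?m) A * (\<Sum>\<omega>\<in>Pow E. wH \<omega>)"
      by (rule dom_upper[OF finE wHnn _ cU incA indA]) (use m01 in auto)
    have Z: "(\<Sum>\<omega>\<in>Pow E. wH \<omega>) = csum E S H W" unfolding csum_def wH_def ..
    have split: "(\<Sum>\<omega>\<in>A \<inter> Pow E. wH \<omega>) + csum E S H (\<lambda>\<omega>. if D e \<omega> then W \<omega> else 0) = (\<Sum>\<omega>\<in>Pow E. wH \<omega>)"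
    proof -
      have "(\<Sum>\<omega>\<in>A \<inter> Pow E. wH \<omega>) = (\<Sum>\<omega>\<in>Pow E. if \<not> D e \<omega> then wH \<omega> else 0)"
      proof -
        have "A \<inter> Pow E = Pow E \<inter> {\<omega>. \<not> D e \<omega>}" unfolding A_def by blast
        then show ?thesis using sum.inter_restrict[of "Pow E" wH "{\<omega>. \<not> D e \<omega>}"] finE by simp
      qed
      moreover have "csum E S H (\<lambda>\<omega>. if D e \<omega> then W \<omega> else 0) = (\<Sum>\<omega>\<in>Pow E. if D e \<omega> then wH \<omega> else 0)"
        unfolding csum_def wH_def by (intro sum.cong) auto
      moreover have "(\<Sum>\<omega>\<in>Pow E. if \<not> D e \<omega> then wH \<omega> else 0) + (\<Sum>\<omega>\<in>Pow E. if D e \<omega> then wH \<omega> else 0) = (\<Sum>\<omega>\<in>Pow E. wH \<omega>)"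
        by (subst sum.distrib[symmetric]) (rule sum.cong, auto)
      ultimately show ?thesis by simp
    qed
    have PA: "prod_measure E (\<lambda>_. ?m) A + prod_measure E (\<lambda>_. ?m) {\<omega>. \<omega> \<subseteq> E \<and> D e \<omega>} = 1"
      unfolding A_def by (rule pm_compl[OF finE])
    define PD where "PD = prod_measure E (\<lambda>_. ?m) {\<omega>. \<omega> \<subseteq> E \<and> D e \<omega>}"
    define PAA where "PAA = prod_measure E (\<lambda>_. ?m) A"
    have e1: "PD = 1 - PAA" using PA unfolding PD_def PAA_def by simp
    have e2: "PD * csum E S H W = csum E S H W - PAA * csum E S H W" unfolding e1 by (simp add: algebra_simps)
    have "PD * csum E S H W \<le> csum E S H (\<lambda>\<omega>. if D e \<omega> then W \<omega> else 0)"
      using main Z split e2 unfolding PAA_def[symmetric] by (simp add: mult.commute)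
    then show ?thesis unfolding PD_def .
  qed
  show ?thesis
  proof (intro conjI impI)
    assume lt: "p < ?p'"
    have p0: "0 < p"
    proof (rule ccontr)
      assume "\<not> 0 < p" then have "p = 0" using assms by auto
      then show False using lt unfolding p_prime_def by simp
    qed
    have p1: "p < 1"
    proof (rule ccontr)
      assume "\<not> p < 1" then have "p = 1" using assms by auto
      then show False using lt unfolding p_prime_def by simp
    qed
    have mx: "max p ?p' = ?p'" using lt by simp
    define r1 where "r1 e = p + (if e \<in> Ehat then eps e else 0)" for e
    have Pb: "0 \<le> prod_measure E (\<lambda>_. ?p') X \<and> prod_measure E (\<lambda>_. ?p') X \<le> 1" for X
      using p'01[OF p0 p1] pm_nonneg[of E "\<lambda>_. ?p'" X] pm_le1[OF finE, of "\<lambda>_. ?p'" X] by auto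
    have eps1: "eps e = (?p' - p) * prod_measure E (\<lambda>_. ?p') {\<omega>. \<omega> \<subseteq> E \<and> D e \<omega>}" for e
      unfolding eps_eq mx using lt by simp
    have rb: "\<forall>e\<in>E. 0 \<le> r1 e \<and> r1 e \<le> 1"
    proof
      fix e assume "e \<in> E"
      have "0 \<le> eps e" "eps e \<le> ?p' - p" unfolding eps1 using Pb lt
        by (auto intro: mult_nonneg_nonneg mult_left_le)
      then show "0 \<le> r1 e \<and> r1 e \<le> 1" unfolding r1_def using p0 p'01[OF p0 p1] by auto
    qed
    have cL: "condL E Ehat UNIV W r1" unfolding condL_def
    proof (intro ballI allI impI)
      fix f S H assume f: "f \<in> E \<inter> UNIV" and S: "S \<subseteq> E - {f}" and H: "H \<subseteq> S" and B: "f \<in> Ehat \<longrightarrow> S \<subseteq> Ehat"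
      have fE: "f \<in> E" and fS: "f \<notin> S" using f S by auto
      let ?E = "E - {f}"
      have rhs: "csum E S H (\<lambda>\<omega>. if f \<in> \<omega> then W \<omega> else 0) = csum ?E S H (\<lambda>\<omega>. W (insert f \<omega>))"
        by (rule csum_merge_open[OF finE fE fS])
      have lhs: "csum E S H W = csum ?E S H (\<lambda>\<omega>. W (insert f \<omega>) + W \<omega>)"
        by (rule csum_merge[OF finE fE fS])
      have ge: "p * (W (insert f \<omega>) + W \<omega>) \<le> W (insert f \<omega>)" if "\<omega> \<in> Pow ?E" for \<omega>
      proof -
        have "W (insert f \<omega>) = (if ends f \<in> conn_rel V ends \<omega> \<alpha> then p else ?p') * (W (insert f \<omega>) + W \<omega>)"
          using FK[OF p0 p1 fE, of \<omega>] that by simp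
        moreover have "p * (W (insert f \<omega>) + W \<omega>) \<le> (if ends f \<in> conn_rel V ends \<omega> \<alpha> then p else ?p') * (W (insert f \<omega>) + W \<omega>)"
          using Wnn p0 p1 lt by (intro mult_right_mono) auto
        ultimately show ?thesis by simp
      qed
      show "r1 f * csum E S H W \<le> csum E S H (\<lambda>\<omega>. if f \<in> \<omega> then W \<omega> else 0)"
      proof (cases "f \<in> Ehat")
        case False
        have "csum ?E S H (\<lambda>\<omega>. p * (W (insert f \<omega>) + W \<omega>)) \<le> csum ?E S H (\<lambda>\<omega>. W (insert f \<omega>))"
          using ge by (intro csum_mono) auto
        then show ?thesis unfolding rhs lhs r1_def csum_cmult using False by simp
      next
        case True
        then have SE: "S \<subseteq> Ehat" using B by auto
        let ?P = "prod_measure E (\<lambda>_. ?p') {\<omega>. \<omega> \<subseteq> E \<and> D f \<omega>}"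
        have pw: "p * (W (insert f \<omega>) + W \<omega>) + (?p' - p) * (if D f \<omega> then W (insert f \<omega>) + W \<omega> else 0) \<le> W (insert f \<omega>)"
          if "\<omega> \<in> Pow ?E" for \<omega>
        proof (cases "D f \<omega>")
          case True
          then have "ends f \<notin> conn_rel V ends \<omega> \<alpha>" using D1 that by auto
          then have "W (insert f \<omega>) = ?p' * (W (insert f \<omega>) + W \<omega>)"
            using FK[OF p0 p1 fE, of \<omega>] that by simp
          then show ?thesis using True by (simp add: algebra_simps)
        next
          case False then show ?thesis using ge[OF that] by simp
        qed
        have "csum ?E S H (\<lambda>\<omega>. p * (W (insert f \<omega>) + W \<omega>) + (?p' - p) * (if D f \<omega> then W (insert f \<omega>) + W \<omega> else 0))
            \<le> csum ?E S H (\<lambda>\<omega>. W (insert f \<omega>))"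
          using pw by (intro csum_mono) auto
        then have s1: "p * csum E S H W + (?p' - p) * csum ?E S H (\<lambda>\<omega>. if D f \<omega> then W (insert f \<omega>) + W \<omega> else 0)
            \<le> csum E S H (\<lambda>\<omega>. if f \<in> \<omega> then W \<omega> else 0)"
          unfolding rhs lhs csum_add csum_cmult .
        have s2: "csum ?E S H (\<lambda>\<omega>. if D f \<omega> then W (insert f \<omega>) + W \<omega> else 0) = csum E S H (\<lambda>\<omega>. if D f \<omega> then W \<omega> else 0)"
          by (rule csum_merge_D[where D="D f", OF finE fE fS D2[OF True, of f], symmetric])
        have s3: "?P * csum E S H W \<le> csum E S H (\<lambda>\<omega>. if D f \<omega> then W \<omega> else 0)"
          using KD[OF p0 p1 SE, of f H] unfolding mx .
        have "(?p' - p) * (?P * csum E S H W) \<le> (?p' - p) * csum E S H (\<lambda>\<omega>. if D f \<omega> then W \<omega> else 0)"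
          using s3 lt by (intro mult_left_mono) auto
        then show ?thesis using s1 s2 unfolding r1_def eps1 using True by (simp add: algebra_simps)
      qed
    qed
    show "stoch_dom E (prod_measure E (\<lambda>e. p + (if e \<in> Ehat then eps e else 0))) (fk_measure V E ends \<alpha> p q)"
      unfolding stoch_dom_def
    proof (intro allI impI)
      fix A assume inc: "increasing_event E A"
      have "prod_measure E r1 A * (\<Sum>\<omega>\<in>Pow E. W \<omega>) \<le> (\<Sum>\<omega>\<in>A \<inter> Pow E. W \<omega>)"
        by (rule dom_lower[OF finE _ rb cL inc]) (use Wnn p0 p1 in auto)
      then have "prod_measure E r1 A \<le> (\<Sum>\<omega>\<in>A \<inter> Pow E. W \<omega>) / (\<Sum>\<omega>\<in>Pow E. W \<omega>)"
        using Zpos[OF p0 p1] by (simp add: pos_le_divide_eq)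
      then show "prod_measure E (\<lambda>e. p + (if e \<in> Ehat then eps e else 0)) A \<le> fk_measure V E ends \<alpha> p q A"
        unfolding fk_measure_def W_def r1_def .
    qed
  next
    assume gt: "?p' < p"
    have p0: "0 < p"
    proof (rule ccontr)
      assume "\<not> 0 < p" then have "p = 0" using assms by auto
      then show False using gt unfolding p_prime_def by simp
    qed
    have p1: "p < 1"
    proof (rule ccontr)
      assume "\<not> p < 1" then have "p = 1" using assms by auto
      then show False using gt unfolding p_prime_def by simp
    qed
    have mx: "max p ?p' = p" using gt by simp
    define r2 where "r2 e = p - (if e \<in> Ehat then eps e else 0)" for e
    have Pb: "0 \<le> prod_measure E (\<lambda>_. p) X \<and> prod_measure E (\<lambda>_. p) X \<le> 1" for X
      using p0 p1 pm_nonneg[of E "\<lambda>_. p" X] pm_le1[OF finE, of "\<lambda>_. p" X] by auto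
    have eps2: "eps e = (p - ?p') * prod_measure E (\<lambda>_. p) {\<omega>. \<omega> \<subseteq> E \<and> D e \<omega>}" for e
      unfolding eps_eq mx using gt by simp
    have rb: "\<forall>e\<in>E. 0 \<le> r2 e \<and> r2 e \<le> 1"
    proof
      fix e assume "e \<in> E"
      have "0 \<le> eps e" "eps e \<le> p - ?p'" unfolding eps2 using Pb gt
        by (auto intro: mult_nonneg_nonneg mult_left_le)
      then show "0 \<le> r2 e \<and> r2 e \<le> 1" unfolding r2_def using p1 p'01[OF p0 p1] by auto
    qed
    have cU: "condU E Ehat UNIV W r2" unfolding condU_def
    proof (intro ballI allI impI)
      fix f S H assume f: "f \<in> E \<inter> UNIV" and S: "S \<subseteq> E - {f}" and H: "H \<subseteq> S" and B: "f \<in> Ehat \<longrightarrow> S \<subseteq> Ehat"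
      have fE: "f \<in> E" and fS: "f \<notin> S" using f S by auto
      let ?E = "E - {f}"
      have rhs: "csum E S H (\<lambda>\<omega>. if f \<in> \<omega> then W \<omega> else 0) = csum ?E S H (\<lambda>\<omega>. W (insert f \<omega>))"
        by (rule csum_merge_open[OF finE fE fS])
      have lhs: "csum E S H W = csum ?E S H (\<lambda>\<omega>. W (insert f \<omega>) + W \<omega>)"
        by (rule csum_merge[OF finE fE fS])
      have le: "W (insert f \<omega>) \<le> p * (W (insert f \<omega>) + W \<omega>)" if "\<omega> \<in> Pow ?E" for \<omega>
      proof -
        have "W (insert f \<omega>) = (if ends f \<in> conn_rel V ends \<omega> \<alpha> then p else ?p') * (W (insert f \<omega>) + W \<omega>)"
          using FK[OF p0 p1 fE, of \<omega>] that by simp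
        moreover have "(if ends f \<in> conn_rel V ends \<omega> \<alpha> then p else ?p') * (W (insert f \<omega>) + W \<omega>) \<le> p * (W (insert f \<omega>) + W \<omega>)"
          using Wnn p0 p1 gt by (intro mult_right_mono) auto
        ultimately show ?thesis by simp
      qed
      show "csum E S H (\<lambda>\<omega>. if f \<in> \<omega> then W \<omega> else 0) \<le> r2 f * csum E S H W"
      proof (cases "f \<in> Ehat")
        case False
        have "csum ?E S H (\<lambda>\<omega>. W (insert f \<omega>)) \<le> csum ?E S H (\<lambda>\<omega>. p * (W (insert f \<omega>) + W \<omega>))"
          using le by (intro csum_mono) auto
        then show ?thesis unfolding rhs lhs r2_def csum_cmult using False by simp
      next
        case True
        then have SE: "S \<subseteq> Ehat" using B by auto
        let ?P = "prod_measure E (\<lambda>_. p) {\<omega>. \<omega> \<subseteq> E \<and> D f \<omega>}"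
        have pw: "W (insert f \<omega>) \<le> p * (W (insert f \<omega>) + W \<omega>) + (?p' - p) * (if D f \<omega> then W (insert f \<omega>) + W \<omega> else 0)"
          if "\<omega> \<in> Pow ?E" for \<omega>
        proof (cases "D f \<omega>")
          case True
          then have "ends f \<notin> conn_rel V ends \<omega> \<alpha>" using D1 that by auto
          then have "W (insert f \<omega>) = ?p' * (W (insert f \<omega>) + W \<omega>)"
            using FK[OF p0 p1 fE, of \<omega>] that by simp
          then show ?thesis using True by (simp add: algebra_simps)
        next
          case False then show ?thesis using le[OF that] by simp
        qed
        have "csum ?E S H (\<lambda>\<omega>. W (insert f \<omega>)) \<le>
            csum ?E S H (\<lambda>\<omega>. p * (W (insert f \<omega>) + W \<omega>) + (?p' - p) * (if D f \<omega> then W (insert f \<omega>) + W \<omega> else 0))"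
          using pw by (intro csum_mono) auto
        then have s1: "csum E S H (\<lambda>\<omega>. if f \<in> \<omega> then W \<omega> else 0) \<le>
            p * csum E S H W + (?p' - p) * csum ?E S H (\<lambda>\<omega>. if D f \<omega> then W (insert f \<omega>) + W \<omega> else 0)"
          unfolding rhs lhs csum_add csum_cmult .
        have s2: "csum ?E S H (\<lambda>\<omega>. if D f \<omega> then W (insert f \<omega>) + W \<omega> else 0) = csum E S H (\<lambda>\<omega>. if D f \<omega> then W \<omega> else 0)"
          by (rule csum_merge_D[where D="D f", OF finE fE fS D2[OF True, of f], symmetric])
        have s3: "?P * csum E S H W \<le> csum E S H (\<lambda>\<omega>. if D f \<omega> then W \<omega> else 0)"
          using KD[OF p0 p1 SE, of f H] unfolding mx .
        have "(p - ?p') * (?P * csum E S H W) \<le> (p - ?p') * csum E S H (\<lambda>\<omega>. if D f \<omega> then W \<omega> else 0)"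
          using s3 gt by (intro mult_left_mono) auto
        then show ?thesis using s1 s2 unfolding r2_def eps2 using True by (simp add: algebra_simps)
      qed
    qed
    show "stoch_dom E (fk_measure V E ends \<alpha> p q) (prod_measure E (\<lambda>e. p - (if e \<in> Ehat then eps e else 0)))"
      unfolding stoch_dom_def
    proof (intro allI impI)
      fix A assume inc: "increasing_event E A"
      have "(\<Sum>\<omega>\<in>A \<inter> Pow E. W \<omega>) \<le> prod_measure E r2 A * (\<Sum>\<omega>\<in>Pow E. W \<omega>)"
        by (rule dom_upper[OF finE _ rb cU inc]) (use Wnn p0 p1 in auto)
      then have "(\<Sum>\<omega>\<in>A \<inter> Pow E. W \<omega>) / (\<Sum>\<omega>\<in>Pow E. W \<omega>) \<le> prod_measure E r2 A"
        using Zpos[OF p0 p1] by (simp add: divide_le_eq)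
      then show "fk_measure V E ends \<alpha> p q A \<le> prod_measure E (\<lambda>e. p - (if e \<in> Ehat then eps e else 0)) A"
        unfolding fk_measure_def W_def r2_def .
    qed
  qed
qed

end
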